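(* Let $n\ge 2$ and let $P$ be a partial $n$-Metric on a set $X$. Define $d:X\times X\to\mathbb{R}$ by $$d(x,y)=P(y,\langle x\rangle^{n-1})-P(\langle x\rangle^n)+P(x,\langle y\rangle^{n-1})-P(\langle y\rangle^n).$$ Then $d$ is a metric on $X$.
   Context: Notation: $\langle a\rangle^k$ denotes the $k$-tuple $(a,a,\dots,a)$, inserted into the argument list of a function. A partial $n$-Metric on $X$ is a function $P:X^n\to\mathbb{R}$ such that for all $x_1,\dots,x_n,a\in X$: (1) $P(\langle x_1\rangle^n)\le P(\langle x_1\rangle^{n-1},x_2)$; (2) $P(x_1,\dots,x_n)=P(x_{\pi(1)},\dots,x_{\pi(n)})$ for every permutation $\pi$ of $\{1,\dots,n\}$; (3) $P(\langle x_1\rangle^{n-1},x_2)=P(\langle x_1\rangle^n)$ and $P(\langle x_2\rangle^{n-1},x_1)=P(\langle x_2\rangle^n)$ if and only if $x_1=x_2$; (4) $P(x_1,\dots,x_n)\le P(x_1,\dots,x_{n-1},a)+P(\langle a\rangle^{n-1},x_n)-P(\langle a\rangle^n)$. *)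

theory Defs
  imports "HOL-Analysis.Analysis" "HOL-Library.Multiset"
begin

text \<open>A point of X^n is represented as a list of length n. The tuple
  (<a>^k, b1, ..., bm) is written  replicate k a @ [b1,...,bm].\<close>

definition partial_n_metric :: "nat \<Rightarrow> ('a list \<Rightarrow> real) \<Rightarrow> bool" where
  "partial_n_metric n P \<longleftrightarrow>
     (\<forall>x1 x2. P (replicate n x1) \<le> P (replicate (n-1) x1 @ [x2])) \<and>
     (\<forall>xs ys. length xs = n \<longrightarrow> mset ys = mset xs \<longrightarrow> P ys = P xs) \<and>
     (\<forall>x1 x2. (P (replicate (n-1) x1 @ [x2]) = P (replicate n x1) \<and>
               P (replicate (n-1) x2 @ [x1]) = P (replicate n x2)) \<longleftrightarrow> x1 = x2) \<and>
     (\<forall>xs a. length xs = n \<longrightarrow>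
        P xs \<le> P (butlast xs @ [a]) + P (replicate (n-1) a @ [last xs]) - P (replicate n a))"

definition pm_dist :: "nat \<Rightarrow> ('a list \<Rightarrow> real) \<Rightarrow> 'a \<Rightarrow> 'a \<Rightarrow> real" where
  "pm_dist n P x y =
     P (y # replicate (n-1) x) - P (replicate n x) + P (x # replicate (n-1) y) - P (replicate n y)"

end

theory Submission
  imports Defs
begin

theorem theorem2p13:
  fixes n :: nat and P :: "'a list \<Rightarrow> real"
  assumes "n \<ge> 2" and "partial_n_metric n P"
  shows "Metric_space UNIV (pm_dist n P)"
proof -
  define q where "q x y = P (replicate (n-1) x @ [y])" for x y
  define p where "p x = P (replicate n x)" for x
  have A1: "\<And>x y. p x \<le> q x y" using assms(2) unfolding partial_n_metric_def p_def q_def by blast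
  have perm: "\<And>xs ys. length xs = n \<Longrightarrow> mset ys = mset xs \<Longrightarrow> P ys = P xs"
    using assms(2) unfolding partial_n_metric_def by blast
  have A3: "\<And>x y. (q x y = p x \<and> q y x = p y) \<longleftrightarrow> x = y"
    using assms(2) unfolding partial_n_metric_def p_def q_def by blast
  have A4: "\<And>xs a. length xs = n \<Longrightarrow>
        P xs \<le> P (butlast xs @ [a]) + P (replicate (n-1) a @ [last xs]) - P (replicate n a)"
    using assms(2) unfolding partial_n_metric_def by blast
  have sw: "P (y # replicate (n-1) x) = q x y" for x y
    unfolding q_def by (rule perm) (use assms(1) in auto)
  have d: "pm_dist n P x y = q x y - p x + q y x - p y" for x y
    unfolding pm_dist_def sw p_def by simp
  have tri: "q x z - p x \<le> (q x y - p x) + (q y z - p y)" for x y z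
  proof -
    have "length (replicate (n-1) x @ [z]) = n" using assms(1) by simp
    from A4[OF this, of y] show ?thesis
      by (simp add: q_def p_def butlast_append)
  qed
  show ?thesis
  proof
    fix x y
    show "0 \<le> pm_dist n P x y" using A1[of x y] A1[of y x] d by simp
    show "pm_dist n P x y = pm_dist n P y x" using d by simp
    show "pm_dist n P x y = 0 \<longleftrightarrow> x = y" using A1[of x y] A1[of y x] A3[of x y] d by auto
  next
    fix u v w
    show "pm_dist n P u w \<le> pm_dist n P u v + pm_dist n P v w"
      using tri[where x=u and y=v and z=w] tri[where x=w and y=v and z=u] d[of u w] d[of u v] d[of v w] by linarith
  qed
qed

end
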